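(* Let $N$ be an odd positive integer and $G$ a group as described in the context. For all $\chi_1,\chi_2\in G$ and $m,n\in\mathbb{Z}$, on the Fock space, $$[L_m^{\chi_1},L_n^{\chi_2}]=(m-n)L_{m+n}^{\chi_1\chi_2}+\delta_{m,-n}\Big[\frac mN L(-1,\chi_1\chi_2)+\frac{m^3}{12}\sum_{k=1}^N(\chi_1\chi_2)(k)\Big].$$ Equivalently, with $L'^{\chi}_0:=L_0^{\chi}+\frac1{2N}L(-1,\chi)$, one has $[L_m^{\chi_1},L_{-m}^{\chi_2}]=2m\,L'^{\chi_1\chi_2}_0+\frac{m^3}{12}\sum_{k=1}^N(\chi_1\chi_2)(k)$.
   Context: $G$ is a finite abelian group, under pointwise multiplication, of functions $\mathbb{Z}/N\mathbb{Z}\to\mathbb{C}$ (its identity element $e$ need not be the constant function $1$), such that every $\chi\in G$ satisfies $\chi(j)=\chi(-j)$ for all $j$, and every $\chi\in G$ other than $e$ satisfies $\sum_{k=1}^N\chi(k)=0$. Oscillator algebra: generators $a_j$ ($j\in\mathbb{Z}$), central $1$, $[a_m,a_n]=m\delta_{m,-n}$, acting on its Fock space (each vector killed by $a_j$ for $j\gg0$). Normal ordering: $:a_ia_j:=a_ia_j$ if $i\le j$, $=a_ja_i$ otherwise. Functions on $\mathbb{Z}/N\mathbb{Z}$ are viewed as $N$-periodic functions on $\mathbb{Z}$. $L_n^{\chi}:=\frac{1}{2N}\sum_{j\in\mathbb{Z}}\chi(j):a_{-j}a_{j+nN}:$. For $N$-periodic $\chi$, $L(-1,\chi):=-\frac{1}{2N}\sum_{k=1}^N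 k^2\chi(k)+\frac12\sum_{k=1}^N k\chi(k)-\frac N{12}\sum_{k=1}^N\chi(k)$. *)

theory Defs
  imports Complex_Main "HOL-Library.Groups_Big_Fun" "HOL-Algebra.Group"
begin

text \<open>Representation of the oscillator algebra on a complex vector space V
 (vector space structure given by scale).  The operator a j is the action of
 the generator a_j; the central element 1 acts as the identity.\<close>

definition oscillator_rep ::
  "(complex \<Rightarrow> 'v::ab_group_add \<Rightarrow> 'v) \<Rightarrow> (int \<Rightarrow> 'v \<Rightarrow> 'v) \<Rightarrow> bool" where
  "oscillator_rep scale a \<longleftrightarrow>
     vector_space scale \<and>
     (\<forall>j. Vector_Spaces.linear scale scale (a j)) \<and>
     (\<forall>m n v. a m (a n v) - a n (a m v) = (if m = - n then scale (of_int m) v else 0))"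

text \<open>Fock-space condition: every vector is killed by a_j for j large.\<close>
definition restricted :: "(int \<Rightarrow> 'v::zero \<Rightarrow> 'v) \<Rightarrow> bool" where
  "restricted a \<longleftrightarrow> (\<forall>v. \<exists>J. \<forall>j\<ge>J. a j v = 0)"

definition normal_ord :: "(int \<Rightarrow> 'v \<Rightarrow> 'v) \<Rightarrow> int \<Rightarrow> int \<Rightarrow> 'v \<Rightarrow> 'v" where
  "normal_ord a i j v = (if i \<le> j then a i (a j v) else a j (a i v))"

text \<open>L_n^chi = 1/(2N) sum_{j in Z} chi(j) :a_{-j} a_{j+nN}: ; on each vector only
 finitely many terms are nonzero, and the sum is the finitely supported sum Sum_any.\<close>
definition Lop ::
  "(complex \<Rightarrow> 'v::ab_group_add \<Rightarrow> 'v) \<Rightarrow> (int \<Rightarrow> 'v \<Rightarrow> 'v) \<Rightarrow> nat \<Rightarrow> (int \<Rightarrow> complex)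
    \<Rightarrow> int \<Rightarrow> 'v \<Rightarrow> 'v" where
  "Lop scale a N chi n v =
     scale (1 / (2 * of_nat N))
       (Sum_any (\<lambda>j::int. scale (chi j) (normal_ord a (- j) (j + n * int N) v)))"

definition Lminus1 :: "nat \<Rightarrow> (int \<Rightarrow> complex) \<Rightarrow> complex" where
  "Lminus1 N chi =
     - (1 / (2 * of_nat N)) * (\<Sum>k=1..int N. of_int (k^2) * chi k)
     + (1/2) * (\<Sum>k=1..int N. of_int k * chi k)
     - (of_nat N / 12) * (\<Sum>k=1..int N. chi k)"

text \<open>The group of functions Z/NZ -> C (as N-periodic functions on Z) under
 pointwise multiplication, with identity e.\<close>
definition fun_group :: "(int \<Rightarrow> complex) set \<Rightarrow> (int \<Rightarrow> complex) \<Rightarrow> (int \<Rightarrow> complex) monoid" where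
  "fun_group G e = \<lparr>carrier = G, mult = (\<lambda>f g x. f x * g x), one = e\<rparr>"

end

theory Submission
  imports Defs
begin

lemma fin_bound:
  fixes f :: "int \<Rightarrow> 'b::zero"
  assumes "\<And>j. \<bar>j\<bar> > B \<Longrightarrow> f j = 0"
  shows "finite {j. f j \<noteq> 0}"
proof (rule finite_subset[of _ "{-B..B}"])
  show "{j. f j \<noteq> 0} \<subseteq> {-B..B}"
  proof
    fix j assume "j \<in> {j. f j \<noteq> 0}"
    then have "\<not> \<bar>j\<bar> > B" using assms by auto
    then show "j \<in> {-B..B}" by auto
  qed
qed simp

lemma fin_mono:
  assumes "finite {j. f j \<noteq> 0}" "\<And>j. f j = 0 \<Longrightarrow> g j = 0"
  shows "finite {j. g j \<noteq> (0::'b::zero)}"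
  by (rule finite_subset[OF _ assms(1)]) (use assms(2) in blast)

lemma fin_add:
  fixes f g :: "'a \<Rightarrow> 'b::monoid_add"
  assumes "finite {j. f j \<noteq> 0}" "finite {j. g j \<noteq> 0}"
  shows "finite {j. f j + g j \<noteq> 0}"
  by (rule finite_subset[of _ "{j. f j \<noteq> 0} \<union> {j. g j \<noteq> 0}"]) (use assms in auto)

lemma fin_diff:
  fixes f g :: "'a \<Rightarrow> 'b::group_add"
  assumes "finite {j. f j \<noteq> 0}" "finite {j. g j \<noteq> 0}"
  shows "finite {j. f j - g j \<noteq> 0}"
  by (rule finite_subset[of _ "{j. f j \<noteq> 0} \<union> {j. g j \<noteq> 0}"]) (use assms in auto)

lemma SA_add:
  fixes f g :: "'a \<Rightarrow> 'b::comm_monoid_add"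
  assumes "finite {j. f j \<noteq> 0}" "finite {j. g j \<noteq> 0}"
  shows "Sum_any (\<lambda>j. f j + g j) = Sum_any f + Sum_any g"
  using Sum_any.distrib[OF assms] .

lemma SA_lin:
  fixes F :: "'a::ab_group_add \<Rightarrow> 'b::ab_group_add"
  assumes add: "\<And>x y. F (x + y) = F x + F y" and fin: "finite {j. g j \<noteq> 0}"
  shows "F (Sum_any g) = Sum_any (\<lambda>j. F (g j))"
proof -
  interpret additive F by standard (rule add)
  have "Sum_any g = sum g {j. g j \<noteq> 0}" by (rule Sum_any.expand_superset[OF fin]) simp
  moreover have "Sum_any (\<lambda>j. F (g j)) = sum (\<lambda>j. F (g j)) {j. g j \<noteq> 0}"
    by (rule Sum_any.expand_superset[OF fin]) (auto simp: zero)
  ultimately show ?thesis by (simp add: sum)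
qed

lemma SA_minus:
  fixes f :: "'a \<Rightarrow> 'b::ab_group_add"
  assumes "finite {j. f j \<noteq> 0}"
  shows "Sum_any (\<lambda>j. - f j) = - Sum_any f"
  using SA_lin[of uminus f] assms by simp

lemma SA_diff:
  fixes f g :: "'a \<Rightarrow> 'b::ab_group_add"
  assumes "finite {j. f j \<noteq> 0}" "finite {j. g j \<noteq> 0}"
  shows "Sum_any (\<lambda>j. f j - g j) = Sum_any f - Sum_any g"
proof -
  have "finite {j. - g j \<noteq> 0}" using assms(2) by simp
  then have "Sum_any (\<lambda>j. f j + - g j) = Sum_any f + Sum_any (\<lambda>j. - g j)"
    using SA_add[OF assms(1), of "\<lambda>j. - g j"] by blast
  then show ?thesis using SA_minus[OF assms(2)] by simp
qed

lemma SA_shift: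
  fixes f :: "int \<Rightarrow> 'b::comm_monoid_add"
  shows "Sum_any (\<lambda>j. f (j + d)) = Sum_any f"
  by (rule sym, rule Sum_any.reindex_cong[of "\<lambda>j. j + d"]) (auto simp: bij_def inj_def surj_def o_def intro: exI[of _ "_ - d"])

lemma SA_restrict:
  fixes f :: "'a \<Rightarrow> 'b::comm_monoid_add"
  assumes "finite A"
  shows "Sum_any (\<lambda>j. if j \<in> A then f j else 0) = sum f A"
  using Sum_any.conditionalize[OF assms, of f] by simp

lemma per_mult:
  assumes per: "\<forall>j. chi (j + int N) = chi j"
  shows "chi (j + k * int N) = chi j"
proof -
  have pos: "chi (j + int n * int N) = chi j" for n j
  proof (induction n arbitrary: j)
    case (Suc n)
    have "chi (j + int (Suc n) * int N) = chi ((j + int n * int N) + int N)" by (simp add: algebra_simps)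
    also have "\<dots> = chi j" using per Suc by simp
    finally show ?case .
  qed simp
  show ?thesis
  proof (cases "k \<ge> 0")
    case True then show ?thesis using pos[of j "nat k"] by simp
  next
    case False
    then have "chi ((j + k * int N) + int (nat (-k)) * int N) = chi (j + k * int N)" using pos by blast
    then show ?thesis using False by simp
  qed
qed

definition sf :: "int \<Rightarrow> int \<Rightarrow> complex" where
  "sf x y = (if y < x \<and> x = - y then of_int x else 0)"

locale osc =
  fixes scale :: "complex \<Rightarrow> 'v::ab_group_add \<Rightarrow> 'v" and a :: "int \<Rightarrow> 'v \<Rightarrow> 'v" and N :: nat
  assumes vs: "vector_space scale"
    and lin: "\<And>j. Vector_Spaces.linear scale scale (a j)"
    and comm: "\<And>m n v. a m (a n v) - a n (a m v) = (if m = - n then scale (of_int m) v else 0)"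
    and fock: "\<And>v. \<exists>J. \<forall>j\<ge>J. a j v = 0"
    and Npos: "N > 0"
begin

sublocale module scale using vs by (simp add: module_iff_vector_space)

lemma mh: "module_hom scale scale (a j)" using lin[of j] by (simp add: linear_iff_module_hom)
lemma a_add: "a j (x + y) = a j x + a j y" using module_hom.add[OF mh] .
lemma a_scale: "a j (scale c x) = scale c (a j x)" using module_hom.scale[OF mh] .
lemma a_zero[simp]: "a j 0 = 0" using module_hom.zero[OF mh] .
lemma a_diff: "a j (x - y) = a j x - a j y" using module_hom.diff[OF mh] .
lemma a_minus: "a j (- x) = - a j x" using module_hom.neg[OF mh] .


lemma NO: "a x (a y w) = normal_ord a x y w + scale (sf x y) w"
proof (cases "x \<le> y")
  case True then show ?thesis by (simp add: normal_ord_def sf_def)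
next
  case False
  have "a x (a y w) - a y (a x w) = (if x = - y then scale (of_int x) w else 0)" by (rule comm)
  then show ?thesis using False by (auto simp: normal_ord_def sf_def algebra_simps)
qed

lemma no_add: "normal_ord a x y (u + w) = normal_ord a x y u + normal_ord a x y w"
  by (simp add: normal_ord_def a_add)
lemma no_scale: "normal_ord a x y (scale c u) = scale c (normal_ord a x y u)"
  by (simp add: normal_ord_def a_scale)
lemma no_zero[simp]: "normal_ord a x y 0 = 0"
  by (simp add: normal_ord_def)

lemma fin_no: "finite {j. normal_ord a (c - j) (j + d) w \<noteq> 0}"
proof -
  obtain J where J: "\<forall>j\<ge>J. a j w = 0" using fock by blast
  show ?thesis
  proof (rule fin_bound[where B = "\<bar>J\<bar> + \<bar>c\<bar> + \<bar>d\<bar>"])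
    fix j :: int assume "\<bar>j\<bar> > \<bar>J\<bar> + \<bar>c\<bar> + \<bar>d\<bar>"
    then consider "j > \<bar>J\<bar> + \<bar>c\<bar> + \<bar>d\<bar>" | "-j > \<bar>J\<bar> + \<bar>c\<bar> + \<bar>d\<bar>" by linarith
    then show "normal_ord a (c - j) (j + d) w = 0"
    proof cases
      case 1
      then have "c - j \<le> j + d" "j + d \<ge> J" by linarith+
      then show ?thesis using J by (simp add: normal_ord_def)
    next
      case 2
      then have "\<not> c - j \<le> j + d" "c - j \<ge> J" by linarith+
      then show ?thesis using J by (simp add: normal_ord_def)
    qed
  qed
qed

lemma fin_no': "finite {j. normal_ord a (- j) (j + d) w \<noteq> 0}"
  using fin_no[of 0 d w] by simp

lemma fin_Lterm: "finite {j. scale (chi j) (normal_ord a (- j) (j + d) w) \<noteq> 0}"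
  by (rule fin_mono[OF fin_no'[of d w]]) simp


lemma Lop_add: "Lop scale a N chi n (x + y) = Lop scale a N chi n x + Lop scale a N chi n y"
proof -
  have "Sum_any (\<lambda>j. scale (chi j) (normal_ord a (- j) (j + n * int N) (x + y)))
     = Sum_any (\<lambda>j. scale (chi j) (normal_ord a (- j) (j + n * int N) x) + scale (chi j) (normal_ord a (- j) (j + n * int N) y))"
    by (simp add: no_add scale_right_distrib)
  also have "\<dots> = Sum_any (\<lambda>j. scale (chi j) (normal_ord a (- j) (j + n * int N) x)) + Sum_any (\<lambda>j. scale (chi j) (normal_ord a (- j) (j + n * int N) y))"
    by (rule SA_add[OF fin_Lterm fin_Lterm])
  finally show ?thesis by (simp add: Lop_def scale_right_distrib)
qed

lemma Lop_scale: "Lop scale a N chi n (scale c x) = scale c (Lop scale a N chi n x)"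
proof -
  have "Sum_any (\<lambda>j. scale (chi j) (normal_ord a (- j) (j + n * int N) (scale c x)))
     = Sum_any (\<lambda>j. scale c (scale (chi j) (normal_ord a (- j) (j + n * int N) x)))"
    by (simp add: no_scale mult.commute)
  also have "\<dots> = scale c (Sum_any (\<lambda>j. scale (chi j) (normal_ord a (- j) (j + n * int N) x)))"
    by (rule SA_lin[OF scale_right_distrib fin_Lterm, symmetric])
  finally show ?thesis by (simp add: Lop_def mult.commute)
qed

lemma Lop_zero[simp]: "Lop scale a N chi n 0 = 0"
  using Lop_scale[of chi n 0 0] by simp

lemma Lop_diff: "Lop scale a N chi n (x - y) = Lop scale a N chi n x - Lop scale a N chi n y"
  using Lop_add[of chi n "x - y" y] by (simp add: algebra_simps)

lemma comm3: "a x (a y (a k w)) - a k (a x (a y w))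
   = a x (if y = - k then scale (of_int y) w else 0) + (if x = - k then scale (of_int x) (a y w) else 0)"
proof -
  have "a x (a y (a k w)) - a k (a x (a y w)) = a x (a y (a k w) - a k (a y w)) + (a x (a k (a y w)) - a k (a x (a y w)))"
    by (simp add: a_diff)
  also have "\<dots> = a x (if y = - k then scale (of_int y) w else 0) + (if x = - k then scale (of_int x) (a y w) else 0)"
    by (simp only: comm)
  finally show ?thesis .
qed

lemma comm_no: "normal_ord a x y (a k w) - a k (normal_ord a x y w)
   = (if y = - k then scale (of_int y) (a x w) else 0) + (if x = - k then scale (of_int x) (a y w) else 0)"
proof -
  have e1: "normal_ord a x y u = a x (a y u) - scale (sf x y) u" for u using NO[of x y u] by simp
  have "normal_ord a x y (a k w) - a k (normal_ord a x y w) = a x (a y (a k w)) - a k (a x (a y w))"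
    by (simp add: e1 a_diff a_scale)
  also have "\<dots> = (if y = - k then scale (of_int y) (a x w) else 0) + (if x = - k then scale (of_int x) (a y w) else 0)"
    by (simp add: comm3 a_scale a_minus)
  finally show ?thesis .
qed

lemma LA:
  assumes per: "\<forall>j. chi (j + int N) = chi j" and ev: "\<forall>j. chi j = chi (- j)"
  shows "Lop scale a N chi m (a k w) - a k (Lop scale a N chi m w)
         = scale (- of_int k / of_nat N * chi k) (a (k + m * int N) w)"
proof -
  define P where "P = m * int N"
  define g where "g u = (\<lambda>j. scale (chi j) (normal_ord a (- j) (j + P) u))" for u
  have fg: "finite {j. g u j \<noteq> 0}" for u unfolding g_def by (rule fin_Lterm)
  have L: "Lop scale a N chi m u = scale (1 / (2 * of_nat N)) (Sum_any (g u))" for u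
    by (simp add: Lop_def g_def P_def)
  have e1: "a k (Sum_any (g w)) = Sum_any (\<lambda>j. a k (g w j))" by (rule SA_lin[where F="a k", OF a_add fg[of w]])
  have f2: "finite {j. a k (g w j) \<noteq> 0}" by (rule fin_mono[OF fg[of w]]) simp
  have e2: "Sum_any (g (a k w)) - Sum_any (\<lambda>j. a k (g w j)) = Sum_any (\<lambda>j. g (a k w) j - a k (g w j))"
    by (rule SA_diff[OF fg f2, symmetric])
  define X where "X = scale (chi k * of_int (- k)) (a (k + P) w)"
  have chik: "chi (- k - P) = chi k"
  proof -
    have "chi (- k - P) = chi (k + P)" using ev[rule_format, of "- k - P"] by (simp add: add.commute)
    also have "\<dots> = chi k" using per_mult[OF per] by (simp add: P_def)
    finally show ?thesis .
  qed
  have pw: "g (a k w) j - a k (g w j) = (if j = - k - P then X else 0) + (if j = k then X else 0)" for j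
  proof -
    have "g (a k w) j - a k (g w j) = scale (chi j) (normal_ord a (- j) (j + P) (a k w) - a k (normal_ord a (- j) (j + P) w))"
      by (simp add: g_def a_scale scale_right_diff_distrib)
    also have "\<dots> = scale (chi j) ((if j + P = - k then scale (of_int (j + P)) (a (- j) w) else 0) + (if - j = - k then scale (of_int (- j)) (a (j + P) w) else 0))"
      by (simp only: comm_no)
    also have "\<dots> = (if j = - k - P then X else 0) + (if j = k then X else 0)"
      using chik by (auto simp: X_def scale_right_distrib mult.commute add.commute)
    finally show ?thesis .
  qed
  have "Sum_any (\<lambda>j. g (a k w) j - a k (g w j)) = Sum_any (\<lambda>j. (if j = - k - P then X else 0) + (if j = k then X else 0))"
    by (simp only: pw)
  also have "\<dots> = X + X"
    by (subst SA_add) (auto intro: finite_subset[of _ "{- k - P}"] finite_subset[of _ "{k}"])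
  finally have e3: "Sum_any (\<lambda>j. g (a k w) j - a k (g w j)) = X + X" .
  have "Lop scale a N chi m (a k w) - a k (Lop scale a N chi m w) = scale (1 / (2 * of_nat N)) (X + X)"
    by (simp only: L a_scale e1 e2 e3 flip: scale_right_diff_distrib)
  also have "\<dots> = scale (- of_int k / of_nat N * chi k) (a (k + m * int N) w)"
  proof -
    have XX: "X + X = scale (chi k * of_int (- k) + chi k * of_int (- k)) (a (k + P) w)"
      unfolding X_def by (rule scale_left_distrib[symmetric])
    have co: "1 / (2 * of_nat N) * (chi k * of_int (- k) + chi k * of_int (- k)) = - of_int k / of_nat N * chi k"
      using Npos by (simp add: field_simps)
    show ?thesis by (simp only: XX scale_scale co P_def)
  qed
  finally show ?thesis .
qed


lemma LB:
  assumes per: "\<forall>j. chi (j + int N) = chi j" and ev: "\<forall>j. chi j = chi (- j)"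
  shows "Lop scale a N chi m (normal_ord a x y w) - normal_ord a x y (Lop scale a N chi m w)
    = scale (- of_int x / of_nat N * chi x) (a (x + m * int N) (a y w))
      + scale (- of_int y / of_nat N * chi y) (a x (a (y + m * int N) w))"
proof -
  let ?L = "Lop scale a N chi m"
  have e1: "normal_ord a x y u = a x (a y u) - scale (sf x y) u" for u using NO[of x y u] by simp
  have "?L (normal_ord a x y w) - normal_ord a x y (?L w) = ?L (a x (a y w)) - a x (a y (?L w))"
    by (simp add: e1 Lop_diff Lop_scale)
  also have "\<dots> = (?L (a x (a y w)) - a x (?L (a y w))) + a x (?L (a y w) - a y (?L w))"
    by (simp add: a_diff)
  also have "\<dots> = scale (- of_int x / of_nat N * chi x) (a (x + m * int N) (a y w))
      + scale (- of_int y / of_nat N * chi y) (a x (a (y + m * int N) w))"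
    by (simp only: LA[OF per ev] a_scale)
  finally show ?thesis .
qed

lemma main_op:
  fixes m n :: int
  assumes per1: "\<forall>j. chi1 (j + int N) = chi1 j" and ev1: "\<forall>j. chi1 j = chi1 (- j)"
    and per2: "\<forall>j. chi2 (j + int N) = chi2 j"
  defines "chi \<equiv> \<lambda>j. chi1 j * chi2 j"
  defines "\<sigma> \<equiv> \<lambda>j. chi j * of_int j / of_nat N * sf (m * int N - j) (j + n * int N)
                   - chi j * of_int (j + n * int N) / of_nat N * sf (- j) (j + (m * int N + n * int N))"
  shows "Lop scale a N chi1 m (Lop scale a N chi2 n v) - Lop scale a N chi2 n (Lop scale a N chi1 m v)
    = scale (of_int (m - n)) (Lop scale a N chi (m + n) v) + scale (1 / (2 * of_nat N) * Sum_any \<sigma>) v"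
proof -
  define P where "P = m * int N"
  define Q where "Q = n * int N"
  define c :: complex where "c = 1 / (2 * of_nat N)"
  let ?L1 = "Lop scale a N chi1 m"
  define g where "g u = (\<lambda>j. scale (chi2 j) (normal_ord a (- j) (j + Q) u))" for u
  have fg: "finite {j. g u j \<noteq> 0}" for u unfolding g_def by (rule fin_Lterm)
  have L2: "Lop scale a N chi2 n u = scale c (Sum_any (g u))" for u
    by (simp add: Lop_def g_def Q_def c_def)
  have e1: "?L1 (Sum_any (g v)) = Sum_any (\<lambda>j. ?L1 (g v j))"
    by (rule SA_lin[where F="?L1", OF Lop_add fg[of v]])
  have f2: "finite {j. ?L1 (g v j) \<noteq> 0}" by (rule fin_mono[OF fg[of v]]) simp
  have e2: "Sum_any (\<lambda>j. ?L1 (g v j)) - Sum_any (g (?L1 v)) = Sum_any (\<lambda>j. ?L1 (g v j) - g (?L1 v) j)"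
    by (rule SA_diff[OF f2 fg, symmetric])
  define h1 where "h1 j = scale (chi j * of_int j / of_nat N) (normal_ord a (P - j) (j + Q) v)" for j
  define h2 where "h2 j = scale (chi j * of_int (j + Q) / of_nat N) (normal_ord a (- j) (j + (P + Q)) v)" for j
  have fh1: "finite {j. h1 j \<noteq> 0}" unfolding h1_def by (rule fin_mono[OF fin_no[of P Q v]]) simp
  have fh2: "finite {j. h2 j \<noteq> 0}" unfolding h2_def by (rule fin_mono[OF fin_no'[of "P + Q" v]]) simp
  have ch1: "chi1 (- j) = chi1 j" for j using ev1 by simp
  have ch2: "chi1 (j + Q) = chi1 j" for j using per_mult[OF per1] by (simp add: Q_def)
  have pw: "?L1 (g v j) - g (?L1 v) j = h1 j - h2 j + scale (\<sigma> j) v" for j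
  proof -
    have "?L1 (g v j) - g (?L1 v) j = scale (chi2 j) (?L1 (normal_ord a (- j) (j + Q) v) - normal_ord a (- j) (j + Q) (?L1 v))"
      by (simp add: g_def Lop_scale no_scale scale_right_diff_distrib)
    also have "\<dots> = scale (chi2 j) (scale (- of_int (- j) / of_nat N * chi1 (- j)) (a (- j + P) (a (j + Q) v))
      + scale (- of_int (j + Q) / of_nat N * chi1 (j + Q)) (a (- j) (a (j + Q + P) v)))"
      by (simp only: LB[OF per1 ev1] P_def)
    also have "\<dots> = scale (chi2 j) (scale (of_int j / of_nat N * chi1 j) (a (P - j) (a (j + Q) v))
      + scale (- (of_int (j + Q) / of_nat N * chi1 j)) (a (- j) (a (j + (P + Q)) v)))"
    proof -
      have "- of_int (- j) / of_nat N * chi1 (- j) = of_int j / of_nat N * chi1 j" by (simp add: ch1)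
      moreover have "- of_int (j + Q) / of_nat N * chi1 (j + Q) = - (of_int (j + Q) / of_nat N * chi1 j)"
        unfolding ch2 by (simp add: field_split_simps algebra_simps)
      moreover have "- j + P = P - j" "j + Q + P = j + (P + Q)" by simp_all
      ultimately show ?thesis by (simp only:)
    qed
    also have "\<dots> = scale (chi2 j) (scale (of_int j / of_nat N * chi1 j) (normal_ord a (P - j) (j + Q) v + scale (sf (P - j) (j + Q)) v)
      + scale (- (of_int (j + Q) / of_nat N * chi1 j)) (normal_ord a (- j) (j + (P + Q)) v + scale (sf (- j) (j + (P + Q))) v))"
      by (simp only: NO)
    also have "\<dots> = h1 j - h2 j + scale (\<sigma> j) v"
      by (simp add: h1_def h2_def \<sigma>_def chi_def P_def Q_def scale_right_distrib scale_left_diff_distrib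
            scale_right_diff_distrib algebra_simps)
    finally show ?thesis .
  qed
  have fsig: "finite {j. \<sigma> j \<noteq> 0}"
  proof (rule fin_bound[where B = "\<bar>P\<bar> + \<bar>Q\<bar> + 1"])
    fix j :: int assume jB: "\<bar>j\<bar> > \<bar>P\<bar> + \<bar>Q\<bar> + 1"
    then consider "j > \<bar>P\<bar> + \<bar>Q\<bar> + 1" | "-j > \<bar>P\<bar> + \<bar>Q\<bar> + 1" by linarith
    then show "\<sigma> j = 0"
    proof cases
      case 1
      then have "\<not> j + Q < P - j" "\<not> j + (P + Q) < - j" by linarith+
      then show ?thesis by (simp add: \<sigma>_def sf_def P_def Q_def)
    next
      case 2
      then have "j + Q < P - j" "j + (P + Q) < - j" by linarith+
      then show ?thesis
        by (simp add: \<sigma>_def sf_def P_def[symmetric] Q_def[symmetric]) (auto simp: algebra_simps)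
    qed
  qed
  have fsv: "finite {j. scale (\<sigma> j) v \<noteq> 0}" by (rule fin_mono[OF fsig]) simp
  have "Sum_any (\<lambda>j. ?L1 (g v j) - g (?L1 v) j) = Sum_any (\<lambda>j. (h1 j - h2 j) + scale (\<sigma> j) v)"
    by (simp only: pw)
  also have "\<dots> = (Sum_any h1 - Sum_any h2) + scale (Sum_any \<sigma>) v"
    by (simp only: SA_add[OF fin_diff[OF fh1 fh2] fsv] SA_diff[OF fh1 fh2] SA_lin[where F="\<lambda>z. scale z v", OF scale_left_distrib fsig])
  finally have e3: "Sum_any (\<lambda>j. ?L1 (g v j) - g (?L1 v) j) = (Sum_any h1 - Sum_any h2) + scale (Sum_any \<sigma>) v" .
  define k where "k j = scale (chi j) (normal_ord a (- j) (j + (m + n) * int N) v)" for j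
  have fk: "finite {j. k j \<noteq> 0}" unfolding k_def by (rule fin_Lterm)
  have chiP: "chi (j + P) = chi j" for j
    using per_mult[OF per1] per_mult[OF per2] by (simp add: chi_def P_def)
  have "Sum_any h1 = Sum_any (\<lambda>j. h1 (j + P))" by (rule SA_shift[symmetric])
  moreover have "h1 (j + P) - h2 j = scale (of_int (m - n)) (k j)" for j
  proof -
    define X where "X = normal_ord a (- j) (j + (P + Q)) v"
    have i1: "P - (j + P) = - j" "j + P + Q = j + (P + Q)" by simp_all
    have hh1: "h1 (j + P) = scale (chi j * of_int (j + P) / of_nat N) X"
      unfolding h1_def chiP X_def by (simp only: i1)
    have kk: "k j = scale (chi j) X" unfolding k_def X_def P_def Q_def by (simp add: algebra_simps)
    have "h1 (j + P) - h2 j = scale (chi j * of_int (j + P) / of_nat N - chi j * of_int (j + Q) / of_nat N) X"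
      unfolding hh1 h2_def X_def[symmetric] by (rule scale_left_diff_distrib[symmetric])
    also have "chi j * of_int (j + P) / of_nat N - chi j * of_int (j + Q) / of_nat N = of_int (m - n) * chi j"
      using Npos by (simp add: P_def Q_def field_simps)
    finally show ?thesis by (simp add: kk)
  qed
  moreover have fh1s: "finite {j. h1 (j + P) \<noteq> 0}"
    using finite_vimageI[OF fh1, of "\<lambda>j. j + P"] by (simp add: inj_def vimage_def)
  ultimately have "Sum_any h1 - Sum_any h2 = Sum_any (\<lambda>j. scale (of_int (m - n)) (k j))"
    using SA_diff[OF fh1s fh2] by simp
  also have "\<dots> = scale (of_int (m - n)) (Sum_any k)"
    by (rule SA_lin[where F="scale (of_int (m - n))", OF scale_right_distrib fk, symmetric])
  finally have e4: "Sum_any h1 - Sum_any h2 = scale (of_int (m - n)) (Sum_any k)" .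
  have Lk: "Lop scale a N chi (m + n) v = scale c (Sum_any k)" by (simp add: Lop_def k_def c_def)
  have "Lop scale a N chi1 m (Lop scale a N chi2 n v) - Lop scale a N chi2 n (Lop scale a N chi1 m v)
     = scale c (Sum_any (\<lambda>j. ?L1 (g v j))) - scale c (Sum_any (g (?L1 v)))"
    by (simp only: L2 Lop_scale e1)
  also have "\<dots> = scale c (Sum_any (\<lambda>j. ?L1 (g v j)) - Sum_any (g (?L1 v)))"
    by (rule scale_right_diff_distrib[symmetric])
  also have "\<dots> = scale c (scale (of_int (m - n)) (Sum_any k) + scale (Sum_any \<sigma>) v)"
    by (simp only: e2 e3 e4)
  also have "\<dots> = scale (of_int (m - n)) (Lop scale a N chi (m + n) v) + scale (c * Sum_any \<sigma>) v"
    by (simp add: Lk scale_right_distrib mult.commute)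
  finally show ?thesis by (simp only: c_def)
qed

end

lemma sum_block: "(\<Sum>i<(a::nat) + (b::nat). f i) = (\<Sum>i<a. f i) + (\<Sum>r<b. f (a + r))"
  by (induction b) (simp_all add: add.assoc)

lemma sum_int_nat: "sum f {0..<int K} = (\<Sum>i<K. f (int i))"
proof (induction K)
  case (Suc K)
  have "{0..<int (Suc K)} = insert (int K) {0..<int K}" by auto
  then show ?case using Suc by (simp add: add.commute)
qed simp

lemma closed_forms:
  fixes chi :: "int \<Rightarrow> complex" and N M :: nat
  assumes per: "\<forall>j. chi (j + int N) = chi j"
  defines "S0 \<equiv> \<Sum>r<N. chi (int r)"
  defines "R1 \<equiv> \<Sum>r<N. chi (int r) * of_nat r"
  defines "R2 \<equiv> \<Sum>r<N. chi (int r) * of_nat r ^ 2"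
  shows "2 * (\<Sum>i<M * N. chi (int i) * of_nat i) = of_nat N * of_nat M * (of_nat M - 1) * S0 + 2 * of_nat M * R1"
    and "6 * (\<Sum>i<M * N. chi (int i) * of_nat i ^ 2)
         = of_nat N ^ 2 * S0 * (of_nat M - 1) * of_nat M * (2 * of_nat M - 1)
           + 6 * of_nat N * R1 * of_nat M * (of_nat M - 1) + 6 * of_nat M * R2"
proof -
  have cp: "chi (int (M * N + r)) = chi (int r)" for M r
    using per_mult[OF per, of "int r" "int M"] by (simp add: algebra_simps)
  have b1: "(\<Sum>r<N. chi (int (M * N + r)) * of_nat (M * N + r)) = of_nat M * of_nat N * S0 + R1" for M
    by (simp add: cp per_mult[OF per] S0_def R1_def algebra_simps sum.distrib sum_distrib_left)
  have b2: "(\<Sum>r<N. chi (int (M * N + r)) * of_nat (M * N + r) ^ 2)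
      = (of_nat M * of_nat N) ^ 2 * S0 + 2 * of_nat M * of_nat N * R1 + R2" for M
    by (simp add: cp per_mult[OF per] S0_def R1_def R2_def power2_eq_square algebra_simps sum.distrib sum_distrib_left)
  show "2 * (\<Sum>i<M * N. chi (int i) * of_nat i) = of_nat N * of_nat M * (of_nat M - 1) * S0 + 2 * of_nat M * R1"
  proof (induction M)
    case (Suc M)
    have "(\<Sum>i<Suc M * N. chi (int i) * of_nat i) = (\<Sum>i<M * N. chi (int i) * of_nat i) + (of_nat M * of_nat N * S0 + R1)"
      using sum_block[of "\<lambda>i. chi (int i) * of_nat i" "M * N" N] b1[of M] by (simp add: add.commute)
    then show ?case using Suc by (simp add: algebra_simps)
  qed simp
  show "6 * (\<Sum>i<M * N. chi (int i) * of_nat i ^ 2)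
         = of_nat N ^ 2 * S0 * (of_nat M - 1) * of_nat M * (2 * of_nat M - 1)
           + 6 * of_nat N * R1 * of_nat M * (of_nat M - 1) + 6 * of_nat M * R2"
  proof (induction M)
    case (Suc M)
    have "(\<Sum>i<Suc M * N. chi (int i) * of_nat i ^ 2) = (\<Sum>i<M * N. chi (int i) * of_nat i ^ 2)
        + ((of_nat M * of_nat N) ^ 2 * S0 + 2 * of_nat M * of_nat N * R1 + R2)"
      using sum_block[of "\<lambda>i. chi (int i) * of_nat i ^ 2" "M * N" N] b2[of M] by (simp add: add.commute)
    then show ?case using Suc by (simp add: algebra_simps power2_eq_square)
  qed simp
qed


lemma G_closed:
  fixes chi :: "int \<Rightarrow> complex" and N M :: nat
  assumes per: "\<forall>j. chi (j + int N) = chi j"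
  defines "S0 \<equiv> \<Sum>r<N. chi (int r)"
  defines "R1 \<equiv> \<Sum>r<N. chi (int r) * of_nat r"
  defines "R2 \<equiv> \<Sum>r<N. chi (int r) * of_nat r ^ 2"
  shows "(\<Sum>i<M * N. chi (int i) * (of_nat i * (of_nat (M * N) - of_nat i)))
     = of_nat N ^ 2 * S0 * (of_nat M ^ 3 - of_nat M) / 6 + of_nat N * of_nat M * R1 - of_nat M * R2"
proof -
  define T1 where "T1 = (\<Sum>i<M * N. chi (int i) * of_nat i)"
  define T2 where "T2 = (\<Sum>i<M * N. chi (int i) * of_nat i ^ 2)"
  have c1: "2 * T1 = of_nat N * of_nat M * (of_nat M - 1) * S0 + 2 * of_nat M * R1"
    unfolding T1_def S0_def R1_def by (rule closed_forms(1)[OF per])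
  have c2: "6 * T2 = of_nat N ^ 2 * S0 * (of_nat M - 1) * of_nat M * (2 * of_nat M - 1)
           + 6 * of_nat N * R1 * of_nat M * (of_nat M - 1) + 6 * of_nat M * R2"
    unfolding T2_def S0_def R1_def R2_def by (rule closed_forms(2)[OF per])
  have "(\<Sum>i<M * N. chi (int i) * (of_nat i * (of_nat (M * N) - of_nat i))) = of_nat (M * N) * T1 - T2"
    unfolding T1_def T2_def
    by (simp add: sum_distrib_left sum_subtractf[symmetric] power2_eq_square algebra_simps)
  also have "\<dots> = (3 * of_nat (M * N) * (2 * T1) - 6 * T2) / 6" by simp
  also have "\<dots> = of_nat N ^ 2 * S0 * (of_nat M ^ 3 - of_nat M) / 6 + of_nat N * of_nat M * R1 - of_nat M * R2"
    unfolding c1 c2 by (simp add: field_simps power2_eq_square power3_eq_cube)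
  finally show ?thesis .
qed

lemma sum_1N: "(\<Sum>k=1..int N. g k) = (\<Sum>r<N. g (int r)) - g 0 + (g (int N) :: 'a::ab_group_add)"
proof -
  have "{0..int N} = insert 0 {1..int N}" by auto
  then have e1: "sum g {0..int N} = g 0 + (\<Sum>k=1..int N. g k)" by simp
  have "{0..int N} = insert (int N) {0..<int N}" by auto
  then have e2: "sum g {0..int N} = g (int N) + sum g {0..<int N}" by simp
  show ?thesis using e1 e2 sum_int_nat[of g N] by (simp add: algebra_simps)
qed

lemma alg_pos:
  fixes S0 R1 R2 :: complex and N M :: nat
  assumes "N > 0"
  shows "1 / (2 * of_nat N) * ((of_nat N ^ 2 * S0 * (of_nat M ^ 3 - of_nat M) / 6 + of_nat N * of_nat M * R1 - of_nat M * R2) / of_nat N)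
   = of_nat M / of_nat N * (- (1 / (2 * of_nat N)) * R2 + (1/2) * R1 - (of_nat N / 12) * S0) + of_nat M ^ 3 / 12 * S0"
  using assms by (simp add: field_simps) (simp add: algebra_simps power2_eq_square power3_eq_cube)

lemma alg_neg:
  fixes S0 R1 R2 :: complex and N M :: nat
  assumes "N > 0"
  shows "1 / (2 * of_nat N) * (- (of_nat N ^ 2 * S0 * (of_nat M ^ 3 - of_nat M) / 6 + of_nat N * of_nat M * R1 - of_nat M * R2) / of_nat N)
   = - of_nat M / of_nat N * (- (1 / (2 * of_nat N)) * R2 + (1/2) * R1 - (of_nat N / 12) * S0) + - (of_nat M ^ 3) / 12 * S0"
  using assms by (simp add: field_simps) (simp add: algebra_simps power2_eq_square power3_eq_cube)

lemma central:
  fixes chi :: "int \<Rightarrow> complex" and N :: nat and m n :: int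
  assumes Npos: "N > 0" and per: "\<forall>j. chi (j + int N) = chi j" and ev: "\<forall>j. chi j = chi (- j)"
    and mn: "m = - n"
  defines "\<sigma> \<equiv> \<lambda>j. chi j * of_int j / of_nat N * sf (m * int N - j) (j + n * int N)
                   - chi j * of_int (j + n * int N) / of_nat N * sf (- j) (j + (m * int N + n * int N))"
  shows "1 / (2 * of_nat N) * Sum_any \<sigma>
     = of_int m / of_nat N * Lminus1 N chi + of_int (m ^ 3) / 12 * (\<Sum>k=1..int N. chi k)"
proof -
  define S0 where "S0 = (\<Sum>r<N. chi (int r))"
  define R1 where "R1 = (\<Sum>r<N. chi (int r) * of_nat r)"
  define R2 where "R2 = (\<Sum>r<N. chi (int r) * of_nat r ^ 2)"
  define Gf where "Gf M = of_nat N ^ 2 * S0 * (of_nat M ^ 3 - of_nat M) / 6 + of_nat N * of_nat M * R1 - of_nat M * R2" for M :: nat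
  have c0: "chi (int N) = chi 0" using per by (metis add_0)
  have Sk: "(\<Sum>k=1..int N. chi k) = S0" unfolding sum_1N S0_def using c0 by simp
  have Lm: "Lminus1 N chi = - (1 / (2 * of_nat N)) * R2 + (1/2) * R1 - (of_nat N / 12) * S0"
  proof -
    have "(\<Sum>k=1..int N. of_int (k^2) * chi k) = R2 + of_nat N ^ 2 * chi 0"
      unfolding sum_1N R2_def using c0 by (simp add: mult.commute)
    moreover have "(\<Sum>k=1..int N. of_int k * chi k) = R1 + of_nat N * chi 0"
      unfolding sum_1N R1_def using c0 by (simp add: mult.commute)
    ultimately show ?thesis unfolding Lminus1_def Sk using Npos
      by (simp add: field_simps power2_eq_square)
  qed
  have Gint: "sum (\<lambda>j. chi j * of_int (j * (int (M * N) - j))) {0..<int (M * N)} = Gf M" for M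
  proof -
    have "sum (\<lambda>j. chi j * of_int (j * (int (M * N) - j))) {0..<int (M * N)}
        = (\<Sum>i<M * N. chi (int i) * (of_nat i * (of_nat (M * N) - of_nat i)))"
      unfolding sum_int_nat by simp
    also have "\<dots> = Gf M" unfolding Gf_def S0_def R1_def R2_def by (rule G_closed[OF per])
    finally show ?thesis .
  qed
  have fin: "\<And>M f. Sum_any (\<lambda>j. if 0 \<le> j \<and> j < int (M * N) then f j else 0) = sum f {0..<int (M * N)}"
    using SA_restrict[of "{0..<int (_ * N)}"] by simp
  have key: "Sum_any \<sigma> = of_int (sgn m) * Gf (nat \<bar>m\<bar>) / of_nat N"
  proof (cases "m \<ge> 0")
    case True
    define M where "M = nat m"
    have mM: "m = int M" using True by (simp add: M_def)
    have pw: "\<sigma> j = (if 0 \<le> j \<and> j < int (M * N) then chi j * of_int (j * (int (M * N) - j)) / of_nat N else 0)" for j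
    proof -
      have nM: "n = - int M" using mn mM by simp
      have h0: "j < int M * int N" if "j < 0" for j
        using that by (smt (verit) mult_nonneg_nonneg of_nat_0_le_iff)
      show ?thesis
        unfolding \<sigma>_def sf_def nM mM
        by (cases "j < 0"; cases "j < int (M * N)") (insert Npos, auto simp: field_simps h0)
    qed
    have "Sum_any \<sigma> = sum (\<lambda>j. chi j * of_int (j * (int (M * N) - j)) / of_nat N) {0..<int (M * N)}"
      unfolding pw by (rule fin)
    also have "\<dots> = Gf M / of_nat N" by (simp only: sum_divide_distrib[symmetric] Gint)
    finally show ?thesis using mM by (cases "M = 0") (auto simp: Gf_def)
  next
    case False
    define M where "M = nat (- m)"
    have mM: "m = - int M" using False by (simp add: M_def)
    have r: "Sum_any \<sigma> = Sum_any (\<lambda>j. \<sigma> (- j))"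
      by (rule Sum_any.reindex_cong[of uminus]) (auto simp: bij_def inj_def surj_def o_def intro: exI[of _ "- _"])
    have pw: "\<sigma> (- j) = - (if 0 \<le> j \<and> j < int (M * N) then chi j * of_int (j * (int (M * N) - j)) / of_nat N else 0)" for j
    proof -
      have nM: "n = int M" using mn mM by simp
      have h0: "j \<le> int M * int N" if "j \<le> 0" for j
        using that by (smt (verit) mult_nonneg_nonneg of_nat_0_le_iff)
      have h1: "j < int M * int N" if "j < 0" for j
        using that by (smt (verit) mult_nonneg_nonneg of_nat_0_le_iff)
      have h2: "(int M * int N < j) = False" if "j \<le> 0" for j
        using that by (smt (verit) mult_nonneg_nonneg of_nat_0_le_iff)
      have cj: "chi (- j) = chi j" using ev by simp
      show ?thesis
        unfolding \<sigma>_def sf_def nM mM cj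
        by (cases "j \<le> 0"; cases "j \<le> int (M * N)") (insert Npos, auto simp: field_simps h0 h1 h2)
    qed
    define K where "K = int (M * N)"
    define f where "f j = (if 0 \<le> j \<and> j < K then chi j * of_int (j * (K - j)) / of_nat N else 0)" for j
    have ff: "finite {j. f j \<noteq> 0}" by (rule finite_subset[of _ "{0..<K}"]) (auto simp: f_def)
    have "Sum_any (\<lambda>j. \<sigma> (- j)) = Sum_any (\<lambda>j. - f j)"
      unfolding pw f_def K_def by simp
    also have "\<dots> = - Sum_any f" by (rule SA_minus[OF ff])
    also have "\<dots> = - (Gf M / of_nat N)"
      unfolding f_def K_def by (simp only: fin sum_divide_distrib[symmetric] Gint)
    finally have "Sum_any \<sigma> = - (Gf M / of_nat N)" using r by simp
    moreover have "of_int (sgn m) = (-1::complex)" using False by simp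
    moreover have "nat \<bar>m\<bar> = M" using False by (simp add: M_def)
    ultimately show ?thesis by simp
  qed
  show ?thesis
  proof (cases "m \<ge> 0")
    case True
    define M where "M = nat m"
    have mM: "m = int M" using True by (simp add: M_def)
    have g: "of_int (sgn m) * Gf (nat \<bar>m\<bar>) = Gf M" using mM by (cases "M = 0") (simp_all add: Gf_def)
    have "1 / (2 * of_nat N) * (Gf M / of_nat N)
      = of_nat M / of_nat N * (- (1 / (2 * of_nat N)) * R2 + (1/2) * R1 - (of_nat N / 12) * S0) + of_nat M ^ 3 / 12 * S0"
      unfolding Gf_def by (rule alg_pos[OF Npos])
    then show ?thesis unfolding key Lm Sk g mM by simp
  next
    case False
    define M where "M = nat (- m)"
    have mM: "m = - int M" "M > 0" using False by (simp_all add: M_def)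
    have g: "of_int (sgn m) * Gf (nat \<bar>m\<bar>) = - Gf M" using mM by simp
    have "1 / (2 * of_nat N) * (- Gf M / of_nat N)
      = - of_nat M / of_nat N * (- (1 / (2 * of_nat N)) * R2 + (1/2) * R1 - (of_nat N / 12) * S0) + - (of_nat M ^ 3) / 12 * S0"
      unfolding Gf_def by (rule alg_neg[OF Npos])
    then show ?thesis unfolding key Lm Sk g mM by simp
  qed
qed


theorem theorem2p4:
  fixes N :: nat and G :: "(int \<Rightarrow> complex) set" and e :: "int \<Rightarrow> complex"
    and scale :: "complex \<Rightarrow> 'v::ab_group_add \<Rightarrow> 'v" and a :: "int \<Rightarrow> 'v \<Rightarrow> 'v"
  assumes Nodd: "odd N"
    and grp: "comm_group (fun_group G e)"
    and fin: "finite G"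
    and periodic: "\<forall>chi\<in>G. \<forall>j. chi (j + int N) = chi j"
    and even: "\<forall>chi\<in>G. \<forall>j. chi j = chi (- j)"
    and sum0: "\<forall>chi\<in>G. chi \<noteq> e \<longrightarrow> (\<Sum>k=1..int N. chi k) = 0"
    and rep: "oscillator_rep scale a"
    and fock: "restricted a"
    and chi1: "chi1 \<in> G" and chi2: "chi2 \<in> G"
  shows "Lop scale a N chi1 m (Lop scale a N chi2 n v) - Lop scale a N chi2 n (Lop scale a N chi1 m v)
         = scale (of_int (m - n)) (Lop scale a N (\<lambda>x. chi1 x * chi2 x) (m + n) v)
           + (if m = - n
              then scale (of_int m / of_nat N * Lminus1 N (\<lambda>x. chi1 x * chi2 x)
                          + of_int (m ^ 3) / 12 * (\<Sum>k=1..int N. chi1 k * chi2 k)) v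
              else 0)"
proof -
  have Npos: "N > 0" using Nodd by (cases N) auto
  have O: "osc scale a N"
    using rep fock Npos unfolding oscillator_rep_def restricted_def osc_def by blast
  have per1: "\<forall>j. chi1 (j + int N) = chi1 j" and per2: "\<forall>j. chi2 (j + int N) = chi2 j"
    using periodic chi1 chi2 by auto
  have ev1: "\<forall>j. chi1 j = chi1 (- j)" and ev2: "\<forall>j. chi2 j = chi2 (- j)"
    using even chi1 chi2 by auto
  define \<sigma> where "\<sigma> = (\<lambda>j. (\<lambda>j. chi1 j * chi2 j) j * of_int j / of_nat N * sf (m * int N - j) (j + n * int N)
                   - (\<lambda>j. chi1 j * chi2 j) j * of_int (j + n * int N) / of_nat N * sf (- j) (j + (m * int N + n * int N)))"
  have M: "Lop scale a N chi1 m (Lop scale a N chi2 n v) - Lop scale a N chi2 n (Lop scale a N chi1 m v)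
    = scale (of_int (m - n)) (Lop scale a N (\<lambda>j. chi1 j * chi2 j) (m + n) v) + scale (1 / (2 * of_nat N) * Sum_any \<sigma>) v"
    unfolding \<sigma>_def by (rule osc.main_op[OF O per1 ev1 per2])
  show ?thesis
  proof (cases "m = - n")
    case True
    have perp: "\<forall>j. (\<lambda>j. chi1 j * chi2 j) (j + int N) = (\<lambda>j. chi1 j * chi2 j) j" using per1 per2 by simp
    have evp: "\<forall>j. (\<lambda>j. chi1 j * chi2 j) j = (\<lambda>j. chi1 j * chi2 j) (- j)" using ev1 ev2 by simp
    have "1 / (2 * of_nat N) * Sum_any \<sigma> = of_int m / of_nat N * Lminus1 N (\<lambda>x. chi1 x * chi2 x)
                          + of_int (m ^ 3) / 12 * (\<Sum>k=1..int N. (\<lambda>x. chi1 x * chi2 x) k)"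
      unfolding \<sigma>_def by (rule central[OF Npos perp evp True])
    then show ?thesis using M True by simp
  next
    case False
    have "\<sigma> j = 0" for j
    proof -
      have "m * int N \<noteq> - (n * int N)"
      proof
        assume "m * int N = - (n * int N)"
        then have "(m + n) * int N = 0" by (simp add: algebra_simps)
        then show False using False Npos by simp
      qed
      then show ?thesis unfolding \<sigma>_def sf_def by auto
    qed
    then have "Sum_any \<sigma> = 0" by simp
    moreover have "scale 0 v = 0"
      using rep module.scale_zero_left[of scale v] unfolding oscillator_rep_def module_iff_vector_space by blast
    ultimately show ?thesis using M False by simp
  qed
qed

end
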